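(* Let $\nu>0$, let $K$ be a smooth positive function with antiderivative $J(u)=\int K(u)\,du$ assumed invertible, and let $B\neq 0$, $D\neq 0$, $Q$ be constants. Suppose $C(u)=D\,K(u)\exp\!\left(\frac{1}{B}J(u)\right)$. Then, on any region of $z>0$, $t>0$ where $Q+\frac{2(1-\nu)}{D}t>0$ and the argument below lies in the range of $J$, $$u(z,t)=J^{-1}\!\left(-2B\ln z+B\ln\left(Q+\frac{2(1-\nu)}{D}t\right)\right)$$ is a solution of $C(u)u_t=z^{-\nu}\left(K(u)z^{\nu}u_z\right)_z$. *)

theory Defs
  imports "HOL-Analysis.Analysis"
begin

definition smooth_fun :: "(real \<Rightarrow> real) \<Rightarrow> bool" where
  "smooth_fun f \<longleftrightarrow> (\<forall>n x. ((deriv ^^ n) f) differentiable (at x))"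

end

theory Submission
  imports Defs "HOL-Complex_Analysis.Complex_Analysis"
begin

lemma invJ_deriv:
  fixes J K :: "real \<Rightarrow> real"
  assumes "\<And>x. (J has_real_derivative K x) (at x)" "inj J" "\<And>x. K x > 0" "w \<in> range J"
  shows "(inv J has_real_derivative inverse (K (inv J w))) (at w)"
proof -
  obtain x where x: "w = J x" using assms(4) by auto
  have cont: "continuous_on UNIV J"
    using assms(1) by (meson DERIV_isCont continuous_at_imp_continuous_on)
  have "(inv J has_real_derivative inverse (K x)) (at (J x))"
    apply (rule has_field_derivative_inverse_strong[where S=UNIV and f=J and g="inv J" and x=x and f'="K x"])
    using assms cont by (auto simp: less_imp_neq[symmetric] dest: injD)
  moreover have "inv J w = x" using x assms(2) by simp
  ultimately show ?thesis using x by simp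
qed

theorem mainTheorem8:
  fixes K J C :: "real \<Rightarrow> real" and nu B D Q :: real and S :: "(real \<times> real) set"
    and u :: "real \<Rightarrow> real \<Rightarrow> real"
  assumes nu_pos: "nu > 0"
    and K_smooth: "smooth_fun K"
    and K_pos: "\<And>x. K x > 0"
    and J_antideriv: "\<And>x. (J has_real_derivative K x) (at x)"
    and J_inj: "inj J"
    and B_nz: "B \<noteq> 0" and D_nz: "D \<noteq> 0"
    and C_def: "\<And>x. C x = D * K x * exp (J x / B)"
    and S_open: "open S"
    and S_region: "\<And>z t. (z, t) \<in> S \<Longrightarrow> z > 0 \<and> t > 0 \<and> Q + 2 * (1 - nu) / D * t > 0
        \<and> -2 * B * ln z + B * ln (Q + 2 * (1 - nu) / D * t) \<in> range J"
    and u_def: "\<And>z t. u z t = inv J (-2 * B * ln z + B * ln (Q + 2 * (1 - nu) / D * t))"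
  shows "\<forall>(z, t) \<in> S.
           (\<lambda>s. u z s) differentiable (at t)
         \<and> (\<lambda>y. u y t) differentiable (at z)
         \<and> (\<lambda>y. K (u y t) * y powr nu * deriv (\<lambda>w. u w t) y) differentiable (at z)
         \<and> C (u z t) * deriv (\<lambda>s. u z s) t
             = z powr (- nu) * deriv (\<lambda>y. K (u y t) * y powr nu * deriv (\<lambda>w. u w t) y) z"
proof (clarify)
  fix z t assume zt: "(z, t) \<in> S"
  define P where "P = Q + 2 * (1 - nu) / D * t"
  have reg: "z > 0" "t > 0" "P > 0" "-2 * B * ln z + B * ln P \<in> range J"
    using S_region[OF zt] by (auto simp: P_def)
  have hz: "((\<lambda>y. u y t) has_real_derivative (inverse (K (u y t)) * (-2 * B / y))) (at y)"
    if y: "(y, t) \<in> S" for y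
  proof -
    have yr: "y > 0" "-2 * B * ln y + B * ln P \<in> range J"
      using S_region[OF y] by (auto simp: P_def)
    have e: "(\<lambda>y. u y t) = (\<lambda>y. inv J (-2 * B * ln y + B * ln P))"
      by (simp add: u_def P_def)
    have d1: "((\<lambda>y. -2 * B * ln y + B * ln P) has_real_derivative (-2 * B / y)) (at y)"
      using yr by (auto intro!: derivative_eq_intros)
    show ?thesis unfolding e
      using DERIV_chain2[OF invJ_deriv[OF J_antideriv J_inj K_pos yr(2)] d1]
      by (simp add: u_def P_def)
  qed
  have Pe: "Q + (2 - 2 * nu) * t / D = P" unfolding P_def by (simp add: algebra_simps)
  have ht: "((\<lambda>s. u z s) has_real_derivative
       (inverse (K (u z t)) * (B * (2 * (1 - nu) / D) / P))) (at t)"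
  proof -
    have e: "(\<lambda>s. u z s) = (\<lambda>s. inv J (-2 * B * ln z + B * ln (Q + 2 * (1 - nu) / D * s)))"
      by (simp add: u_def)
    have d1: "((\<lambda>s. -2 * B * ln z + B * ln (Q + 2 * (1 - nu) / D * s)) has_real_derivative
        (B * (2 * (1 - nu) / D) / P)) (at t)"
      using reg D_nz
      apply (intro derivative_eq_intros refl)
      using Pe apply (auto simp: P_def[symmetric])
      done
    show ?thesis unfolding e
      using DERIV_chain2[OF invJ_deriv[OF J_antideriv J_inj K_pos reg(4)[unfolded P_def]] d1]
      by (simp add: u_def P_def)
  qed
  obtain e where e: "e > 0" "ball (z, t) e \<subseteq> S"
    using S_open zt open_contains_ball by blast
  have ball_S: "(y, t) \<in> S" if "y \<in> ball z e" for y
    using that e by (auto simp: dist_Pair_Pair dist_commute subset_iff)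
  have loc: "K (u y t) * y powr nu * deriv (\<lambda>w. u w t) y = -2 * B * y powr (nu - 1)"
    if "y \<in> ball z e" for y
  proof -
    have yS: "(y, t) \<in> S" using ball_S that .
    have y0: "y > 0" using S_region[OF yS] by simp
    have "deriv (\<lambda>w. u w t) y = inverse (K (u y t)) * (-2 * B / y)"
      using hz[OF yS] by (rule DERIV_imp_deriv)
    moreover have "K (u y t) \<noteq> 0" using K_pos less_imp_neq by (metis order_less_irrefl)
    moreover have "y powr (nu - 1) * y powr 1 = y powr nu"
      using y0 by (simp only: powr_add[symmetric]) simp
    ultimately have a: "K (u y t) * deriv (\<lambda>w. u w t) y = -2 * B / y"
      and b: "y powr nu = y * y powr (nu - 1)" using y0 by (auto simp: field_simps)
    have "K (u y t) * y powr nu * deriv (\<lambda>w. u w t) y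
        = y powr nu * (K (u y t) * deriv (\<lambda>w. u w t) y)" by (simp add: algebra_simps)
    also have "\<dots> = y * y powr (nu - 1) * (-2 * B / y)" by (simp only: a b)
    also have "\<dots> = -2 * B * y powr (nu - 1)" using y0 by (simp add: field_simps)
    finally show ?thesis .
  qed
  have G: "((\<lambda>y. -2 * B * y powr (nu - 1)) has_real_derivative
       (-2 * B * ((nu - 1) * z powr (nu - 1 - 1)))) (at z)"
    using reg by (auto intro!: derivative_eq_intros)
  have F: "((\<lambda>y. K (u y t) * y powr nu * deriv (\<lambda>w. u w t) y) has_real_derivative
       (-2 * B * ((nu - 1) * z powr (nu - 1 - 1)))) (at z)"
    apply (rule has_field_derivative_transform_within_open[OF G, of "ball z e"])
    using e loc by auto
  have Ju: "J (u z t) = -2 * B * ln z + B * ln P"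
    using reg(4) by (simp add: u_def P_def f_inv_into_f)
  have ex: "exp (J (u z t) / B) = P / z^2"
  proof -
    have "J (u z t) / B = ln P - 2 * ln z" using B_nz by (simp add: Ju field_simps)
    moreover have "exp (2 * ln z) = z^2"
    proof -
      have "2 * ln z = ln (z^2)" using reg(1) by (simp add: ln_realpow)
      thus ?thesis using reg(1) by simp
    qed
    ultimately show ?thesis using reg by (simp add: exp_diff)
  qed
  have Kn: "K (u z t) \<noteq> 0" using K_pos by (metis order_less_irrefl)
  have lhs: "C (u z t) * deriv (\<lambda>s. u z s) t = 2 * B * (1 - nu) / z^2"
    using DERIV_imp_deriv[OF ht] C_def ex Kn reg D_nz by (simp add: field_simps)
  have rhs: "z powr (- nu) * (-2 * B * ((nu - 1) * z powr (nu - 1 - 1))) = 2 * B * (1 - nu) / z^2"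
  proof -
    have "z powr (- nu) * z powr (nu - 1 - 1) = z powr (-2)"
      using reg by (simp add: powr_add[symmetric])
    also have "\<dots> = 1 / z^2" using reg by (simp add: powr_minus powr_realpow divide_simps)
    finally have h: "z powr (- nu) * z powr (nu - 1 - 1) = 1 / z^2" .
    have "z powr (- nu) * (-2 * B * ((nu - 1) * z powr (nu - 1 - 1)))
        = -2 * B * (nu - 1) * (z powr (- nu) * z powr (nu - 1 - 1))" by (simp add: algebra_simps)
    also have "\<dots> = 2 * B * (1 - nu) / z^2" using h by (simp add: field_simps)
    finally show ?thesis .
  qed
  show "(\<lambda>s. u z s) differentiable (at t)
         \<and> (\<lambda>y. u y t) differentiable (at z)
         \<and> (\<lambda>y. K (u y t) * y powr nu * deriv (\<lambda>w. u w t) y) differentiable (at z)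
         \<and> C (u z t) * deriv (\<lambda>s. u z s) t
             = z powr (- nu) * deriv (\<lambda>y. K (u y t) * y powr nu * deriv (\<lambda>w. u w t) y) z"
    using ht hz[OF zt] F lhs rhs DERIV_imp_deriv[OF F]
    by (auto simp: real_differentiable_def)
qed

end
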